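(* Let $Q$ and $W$ satisfy the standing assumptions, let $l,m\in\mathbb N_0$ with $m\le l$, and let $\mathcal R=\{(x,\hat x)\in X\times\hat X^{I^l_m}:\hat x\in E^{I^l_m}(x)\}$. Then (i) $\mathcal R$ is a simulation relation from $Q$ to $\hat Q^{I^l_m}$ w.r.t. $U\times Y$ if and only if $Q$ is future unique w.r.t. $I^l_m$; and (ii) $\mathcal R^{-1}$ is a simulation relation from $\hat Q^{I^l_m}$ to $Q$ w.r.t. $W$ if and only if $Q$ is state-based asynchronously $l$-complete w.r.t. $I^l_m$.
   Context: Strings and signals: $\diamond$ is a symbol not in any other set considered. For a set $A$ and $l\in\mathbb N_0$, $A^l$ is the set of strings of length $l$ over $A$, indexed $\zeta=\zeta(0)\cdots\zeta(l-1)$; $\lambda$ is the empty string and $\cdot$ denotes concatenation. For a map $w$ on $\mathbb Z$ (or a string) and integers $t_1\le t_2$, $w|_{[t_1,t_2]}=w(t_1)\cdots w(t_2)$ is the string of length $t_2-t_1+1$ (absolute time forgotten); if $t_2<t_1$ it is $\lambda$. For a set $\mathcal S$ of such maps or strings, $\mathcal S|_{[t_1,t_2]}=\{s|_{[t_1,t_2]}:s\in\mathcal S\}$. State machines: a state machine is $Q=(X,U,Y,\delta,X_0)$ with $X_0\subseteq X$, $\delta\subseteq X\times U\times Y\times X$. Let $H_\delta(x)=\{y:\exists u,x'.\,(x,u,y,x')\in\delta\}$, $F_\delta(x,u)=\{x':\exists y\in H_\delta(x).\,(x,u,y,x')\in\delta\}$, $T_\delta(x)=\bigcup_{u\in U}F_\delta(x,u)$.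 The full behavior $\mathcal B_f(Q)$ is the set of $(\mu,\nu,\xi)\in(U\times Y\times X)^{\mathbb N_0}$ with $\xi(0)\in X_0$ and $(\xi(k),\mu(k),\nu(k),\xi(k+1))\in\delta$ for all $k\in\mathbb N_0$. $Q$ is live and reachable if every $x\in X_0$ is $\xi(0)$ for some $(\mu,\nu,\xi)\in\mathcal B_f(Q)$ and every $x\in X$ is $\xi(k)$ for some such trajectory and some $k$. Standing assumptions: $Q=(X,U,Y,\delta,X_0)$ is live and reachable and satisfies $(x,u,y,x')\in\delta\iff(x'\in F_\delta(x,u)\wedge y\in H_\delta(x))$ for all $x,x'\in X,u\in U,y\in Y$; the external signal space $W$ is finite and either $W=U\times Y$ or $W=Y$. The projection $\pi_W(u,y)$ is $(u,y)$ if $W=U\times Y$ and $y$ if $W=Y$ (likewise $\pi_{U\times Y}(u,y)=(u,y)$, $\pi_Y(u,y)=y$). Behaviors: for a state machine $Q'$ with input set $U$ and output set $Y$, $\mathcal B(Q')$ is the set of $w:\mathbb Z\to W\cup\{\diamond\}$ such that for some $(\mu,\nu,\xi)\in\mathcal B_f(Q')$, $w(k)=\diamond$ for $k<0$ and $w(k)=\pi_W(\mu(k),\nu(k))$ for $k\ge0$. $\mathcal B_S(Q)$ is the set of pairs $(w,\xi)$ of maps on $\mathbb Z$ with $w(k)=\xi(k)=\diamond$ for $k<0$ and $(w(k),\xi(k))=(\pi_W(\mu(k),\nu(k)),\xi'(k))$ for $k\ge0$, for some $(\mu,\nu,\xi')\in\mathcal B_f(Q)$. For a set $\mathcal B$ of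 maps on $\mathbb Z$, $\Pi_l(\mathcal B)=\bigcup_{k\in\mathbb N_0}\mathcal B|_{[k-l+1,k]}$. Corresponding strings: for integers $a,b$ and $x\in X$, $E^{[a,b]}(x)=\{\zeta:\exists(w,\xi)\in\mathcal B_S(Q),k\in\mathbb N_0:\ \xi(k)=x,\ \zeta=w|_{[k+a,k+b]}\}$. For $l,m\in\mathbb N_0$ with $m\le l$, $I^l_m=[m-l,m-1]$. Future uniqueness: $Q$ is future unique w.r.t. $I^l_m$ if for all $x\in X$ and $\zeta,\zeta'\in E^{I^l_m}(x)$, $\zeta|_{[l-m,l-1]}=\zeta'|_{[l-m,l-1]}$. State-based asynchronous $l$-completeness: $Q$ is state-based asynchronously $l$-complete w.r.t. $I^l_m$ if for all $x\in X$ and $\zeta\in\Pi_{l+1}(\mathcal B(Q))$, $\zeta|_{[0,l-1]}\in E^{I^l_m}(x)$ implies $\zeta\in E^{[m-l,m]}(x)$. Abstract state machine: $\hat Q^{I^l_m}=(\hat X^{I^l_m},U,Y,\hat\delta^{I^l_m},\hat X^{I^l_m}_0)$ with $\hat X^{I^l_m}=\bigcup_{x\in X}E^{I^l_m}(x)$, $\hat X^{I^l_m}_0=\bigcup_{x\in X_0}E^{I^l_m}(x)$, and $(\hat x,u,y,\hat x')\in\hat\delta^{I^l_m}$ iff (1) $\hat x'|_{[0,l-m-1]}=(\hat x|_{[0,l-m-1]}\cdot\pi_W(u,y))|_{[1,l-m]}$, (2) $\hat x|_{[l-m,l-1]}=(\pi_W(u,y)\cdot\hat x'|_{[l-m,l-2]})|_{[0,m-1]}$,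 and (3) there are $x,x'\in X$ with $\hat x\in E^{I^l_m}(x)$, $\hat x'\in E^{I^l_m}(x')$, $(x,u,y,x')\in\delta$. Simulation relations: for state machines $Q_i=(X_i,U,Y,\delta_i,X_{0,i})$, $i=1,2$, and $V\in\{U\times Y,Y\}$, a relation $\mathcal R\subseteq X_1\times X_2$ is a simulation relation from $Q_1$ to $Q_2$ w.r.t. $V$ if (a) for every $x_1\in X_{0,1}$ there is $x_2\in X_{0,2}$ with $(x_1,x_2)\in\mathcal R$, and (b) for all $(x_1,x_2)\in\mathcal R$ and $(x_1,u_1,y_1,x_1')\in\delta_1$ there exist $u_2,y_2,x_2'$ with $(x_2,u_2,y_2,x_2')\in\delta_2$, $(x_1',x_2')\in\mathcal R$ and $\pi_V(u_1,y_1)=\pi_V(u_2,y_2)$. $\mathcal R^{-1}=\{(x_2,x_1):(x_1,x_2)\in\mathcal R\}$. *)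

theory Defs
  imports Main
begin

record ('x,'u,'y) sm =
  St   :: "'x set"
  In   :: "'u set"
  Out  :: "'y set"
  Tr   :: "('x \<times> 'u \<times> 'y \<times> 'x) set"
  Init :: "'x set"

definition is_sm :: "('x,'u,'y) sm \<Rightarrow> bool" where
  "is_sm Q \<longleftrightarrow> Init Q \<subseteq> St Q \<and> Tr Q \<subseteq> St Q \<times> In Q \<times> Out Q \<times> St Q"

text \<open>External signals: W = U x Y (flag full = True) or W = Y (full = False).
  An element of W is encoded as a pair ('u option, 'y): (Some u, y) for W = U x Y,
  (None, y) for W = Y. The extra symbol diamond is encoded as None in the type
  ('u option x 'y) option.\<close>
type_synonym ('u,'y) sig = "'u option \<times> 'y"

definition piV :: "bool \<Rightarrow> 'u \<Rightarrow> 'y \<Rightarrow> ('u,'y) sig" where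
  "piV full u y = (if full then Some u else None, y)"

definition W_finite :: "('x,'u,'y) sm \<Rightarrow> bool \<Rightarrow> bool" where
  "W_finite Q full \<longleftrightarrow> finite (Out Q) \<and> (full \<longrightarrow> finite (In Q))"

definition H :: "('x,'u,'y) sm \<Rightarrow> 'x \<Rightarrow> 'y set" where
  "H Q x = {y. \<exists>u x'. (x,u,y,x') \<in> Tr Q}"

definition F :: "('x,'u,'y) sm \<Rightarrow> 'x \<Rightarrow> 'u \<Rightarrow> 'x set" where
  "F Q x u = {x'. \<exists>y \<in> H Q x. (x,u,y,x') \<in> Tr Q}"

definition T :: "('x,'u,'y) sm \<Rightarrow> 'x \<Rightarrow> 'x set" where
  "T Q x = (\<Union>u \<in> In Q. F Q x u)"

definition full_beh :: "('x,'u,'y) sm \<Rightarrow> ((nat \<Rightarrow> 'u) \<times> (nat \<Rightarrow> 'y) \<times> (nat \<Rightarrow> 'x)) set" where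
  "full_beh Q = {(\<mu>,\<nu>,\<xi>). \<xi> 0 \<in> Init Q \<and> (\<forall>k. (\<xi> k, \<mu> k, \<nu> k, \<xi> (Suc k)) \<in> Tr Q)}"

definition live_reachable :: "('x,'u,'y) sm \<Rightarrow> bool" where
  "live_reachable Q \<longleftrightarrow>
     (\<forall>x \<in> Init Q. \<exists>\<mu> \<nu> \<xi>. (\<mu>,\<nu>,\<xi>) \<in> full_beh Q \<and> \<xi> 0 = x) \<and>
     (\<forall>x \<in> St Q. \<exists>\<mu> \<nu> \<xi> k. (\<mu>,\<nu>,\<xi>) \<in> full_beh Q \<and> \<xi> k = x)"

definition standing_tr :: "('x,'u,'y) sm \<Rightarrow> bool" where
  "standing_tr Q \<longleftrightarrow> (\<forall>x \<in> St Q. \<forall>x' \<in> St Q. \<forall>u \<in> In Q. \<forall>y \<in> Out Q.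
      (x,u,y,x') \<in> Tr Q \<longleftrightarrow> (x' \<in> F Q x u \<and> y \<in> H Q x))"

definition fres :: "(int \<Rightarrow> 'a) \<Rightarrow> int \<Rightarrow> int \<Rightarrow> 'a list" where
  "fres w t1 t2 = map w [t1..t2]"

definition sres :: "'a list \<Rightarrow> int \<Rightarrow> int \<Rightarrow> 'a list" where
  "sres s t1 t2 = map (\<lambda>i. s ! nat i) [t1..t2]"

definition beh :: "bool \<Rightarrow> ('x,'u,'y) sm \<Rightarrow> (int \<Rightarrow> ('u,'y) sig option) set" where
  "beh full Q' = {w. \<exists>\<mu> \<nu> \<xi>. (\<mu>,\<nu>,\<xi>) \<in> full_beh Q' \<and>
       (\<forall>k. w k = (if k < 0 then None else Some (piV full (\<mu> (nat k)) (\<nu> (nat k)))))}"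

definition behS :: "bool \<Rightarrow> ('x,'u,'y) sm \<Rightarrow>
    ((int \<Rightarrow> ('u,'y) sig option) \<times> (int \<Rightarrow> 'x option)) set" where
  "behS full Q = {(w,\<xi>). \<exists>\<mu> \<nu> \<xi>'. (\<mu>,\<nu>,\<xi>') \<in> full_beh Q \<and>
       (\<forall>k. w k = (if k < 0 then None else Some (piV full (\<mu> (nat k)) (\<nu> (nat k))))) \<and>
       (\<forall>k. \<xi> k = (if k < 0 then None else Some (\<xi>' (nat k))))}"

definition Pi_l :: "nat \<Rightarrow> (int \<Rightarrow> 'a) set \<Rightarrow> 'a list set" where
  "Pi_l l B = (\<Union>k::nat. (\<lambda>w. fres w (int k - int l + 1) (int k)) ` B)"

definition E :: "bool \<Rightarrow> ('x,'u,'y) sm \<Rightarrow> int \<Rightarrow> int \<Rightarrow> 'x \<Rightarrow> ('u,'y) sig option list set" where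
  "E full Q a b x = {\<zeta>. \<exists>w \<xi> (k::nat). (w,\<xi>) \<in> behS full Q \<and> \<xi> (int k) = Some x \<and>
       \<zeta> = fres w (int k + a) (int k + b)}"

definition EI :: "bool \<Rightarrow> ('x,'u,'y) sm \<Rightarrow> nat \<Rightarrow> nat \<Rightarrow> 'x \<Rightarrow> ('u,'y) sig option list set" where
  "EI full Q l m x = E full Q (int m - int l) (int m - 1) x"

definition future_unique :: "bool \<Rightarrow> ('x,'u,'y) sm \<Rightarrow> nat \<Rightarrow> nat \<Rightarrow> bool" where
  "future_unique full Q l m \<longleftrightarrow> (\<forall>x \<in> St Q. \<forall>\<zeta> \<in> EI full Q l m x. \<forall>\<zeta>' \<in> EI full Q l m x.
      sres \<zeta> (int l - int m) (int l - 1) = sres \<zeta>' (int l - int m) (int l - 1))"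

definition async_complete :: "bool \<Rightarrow> ('x,'u,'y) sm \<Rightarrow> nat \<Rightarrow> nat \<Rightarrow> bool" where
  "async_complete full Q l m \<longleftrightarrow> (\<forall>x \<in> St Q. \<forall>\<zeta> \<in> Pi_l (l+1) (beh full Q).
      sres \<zeta> 0 (int l - 1) \<in> EI full Q l m x \<longrightarrow> \<zeta> \<in> E full Q (int m - int l) (int m) x)"

definition abs_sm :: "bool \<Rightarrow> ('x,'u,'y) sm \<Rightarrow> nat \<Rightarrow> nat \<Rightarrow> (('u,'y) sig option list,'u,'y) sm" where
  "abs_sm full Q l m = \<lparr>
     St = (\<Union>x \<in> St Q. EI full Q l m x),
     In = In Q,
     Out = Out Q,
     Tr = {(xh,u,y,xh').
        sres xh' 0 (int l - int m - 1) =
          sres (sres xh 0 (int l - int m - 1) @ [Some (piV full u y)]) 1 (int l - int m) \<and>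
        sres xh (int l - int m) (int l - 1) =
          sres (Some (piV full u y) # sres xh' (int l - int m) (int l - 2)) 0 (int m - 1) \<and>
        (\<exists>x x'. xh \<in> EI full Q l m x \<and> xh' \<in> EI full Q l m x' \<and> (x,u,y,x') \<in> Tr Q)},
     Init = (\<Union>x \<in> Init Q. EI full Q l m x) \<rparr>"

definition sim_rel :: "('a,'u,'y) sm \<Rightarrow> ('b,'u,'y) sm \<Rightarrow> bool \<Rightarrow> ('a \<times> 'b) set \<Rightarrow> bool" where
  "sim_rel Q1 Q2 fullV R \<longleftrightarrow>
     (\<forall>x1 \<in> Init Q1. \<exists>x2 \<in> Init Q2. (x1,x2) \<in> R) \<and>
     (\<forall>(x1,x2) \<in> R. \<forall>u1 y1 x1'. (x1,u1,y1,x1') \<in> Tr Q1 \<longrightarrow>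
        (\<exists>u2 y2 x2'. (x2,u2,y2,x2') \<in> Tr Q2 \<and> (x1',x2') \<in> R \<and> piV fullV u1 y1 = piV fullV u2 y2))"

end

theory Submission
  imports Defs
begin


lemma fres_len[simp]: "length (fres w a b) = nat (b - a + 1)"
  by (simp add: fres_def)
lemma fres_nth[simp]: "i < nat (b - a + 1) \<Longrightarrow> fres w a b ! i = w (a + int i)"
  by (simp add: fres_def)
lemma sres_len[simp]: "length (sres s a b) = nat (b - a + 1)"
  by (simp add: sres_def)
lemma sres_nth[simp]: "i < nat (b - a + 1) \<Longrightarrow> sres s a b ! i = s ! nat (a + int i)"
  by (simp add: sres_def)

definition win :: "nat \<Rightarrow> nat \<Rightarrow> (int \<Rightarrow> 'a) \<Rightarrow> int \<Rightarrow> 'a list" where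
  "win l m w k = fres w (k + int m - int l) (k + int m - 1)"
definition win1 :: "nat \<Rightarrow> nat \<Rightarrow> (int \<Rightarrow> 'a) \<Rightarrow> int \<Rightarrow> 'a list" where
  "win1 l m w k = fres w (k + int m - int l) (k + int m)"

lemma win_len[simp]: "length (win l m w k) = l" by (simp add: win_def)
lemma win_nth: "i < l \<Longrightarrow> win l m w k ! i = w (k + int m - int l + int i)"
  by (simp add: win_def)
lemma win1_len[simp]: "length (win1 l m w k) = Suc l" by (simp add: win1_def)
lemma win1_nth: "i \<le> l \<Longrightarrow> win1 l m w k ! i = w (k + int m - int l + int i)"
  by (simp add: win1_def)

lemma win1_first: "sres (win1 l m w k) 0 (int l - 1) = win l m w k"
proof (rule nth_equalityI)
  fix i assume "i < length (sres (win1 l m w k) 0 (int l - 1))"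
  then show "sres (win1 l m w k) 0 (int l - 1) ! i = win l m w k ! i"
    by (simp add: win_nth win1_nth)
qed simp

lemma win1_second: "sres (win1 l m w k) 1 (int l) = win l m w (k+1)"
proof (rule nth_equalityI)
  fix i assume "i < length (sres (win1 l m w k) 1 (int l))"
  moreover have "k + int m - int l + (1 + int i) = k + 1 + int m - int l + int i" by simp
  ultimately show "sres (win1 l m w k) 1 (int l) ! i = win l m w (k+1) ! i"
    apply (simp add: win_nth win1_nth nat_add_distrib)
    apply (rule arg_cong[where f=w])
    apply simp
    done
qed simp

definition cond12 :: "nat \<Rightarrow> nat \<Rightarrow> 'a option list \<Rightarrow> 'a \<Rightarrow> 'a option list \<Rightarrow> bool" where
  "cond12 l m xh p xh' \<longleftrightarrow>
     sres xh' 0 (int l - int m - 1) =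
          sres (sres xh 0 (int l - int m - 1) @ [Some p]) 1 (int l - int m) \<and>
     sres xh (int l - int m) (int l - 1) =
          sres (Some p # sres xh' (int l - int m) (int l - 2)) 0 (int m - 1)"

lemma two_piece:
  assumes "length a = l" "length b = l" "m \<le> l"
    "sres a 0 (int l - int m - 1) = sres b 0 (int l - int m - 1)"
    "sres a (int l - int m) (int l - 1) = sres b (int l - int m) (int l - 1)"
  shows "a = b"
proof (rule nth_equalityI)
  show "length a = length b" using assms by simp
  fix i assume i: "i < length a"
  show "a ! i = b ! i"
  proof (cases "i < l - m")
    case True
    have "sres a 0 (int l - int m - 1) ! i = sres b 0 (int l - int m - 1) ! i" using assms(4) by simp
    moreover have "i < nat (int l - int m - 1 - 0 + 1)" using True by simp
    ultimately show ?thesis by simp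
  next
    case False
    define j where "j = i - (l - m)"
    have "sres a (int l - int m) (int l - 1) ! j = sres b (int l - int m) (int l - 1) ! j" using assms(5) by simp
    moreover have "j < nat (int l - 1 - (int l - int m) + 1)" using False i assms j_def by auto
    moreover have "nat (int l - int m + int j) = i" using False assms j_def by auto
    ultimately show ?thesis by simp
  qed
qed

lemma condC:
  assumes "w k = Some p" "m \<le> l"
  shows "cond12 l m (win l m w k) p (win l m w (k+1))"
  unfolding cond12_def
proof
  show "sres (win l m w (k + 1)) 0 (int l - int m - 1) =
    sres (sres (win l m w k) 0 (int l - int m - 1) @ [Some p]) 1 (int l - int m)"
  proof (rule nth_equalityI)
    fix i assume "i < length (sres (win l m w (k + 1)) 0 (int l - int m - 1))"
    then have i: "i < l - m" by simp
    show "sres (win l m w (k + 1)) 0 (int l - int m - 1) ! i =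
      sres (sres (win l m w k) 0 (int l - int m - 1) @ [Some p]) 1 (int l - int m) ! i"
    proof (cases "Suc i < l - m")
      case True
      have e: "nat (int l - int m) = l - m" using assms by simp
      show ?thesis using True i assms by (auto simp: e win_nth nth_append nat_add_distrib intro!: arg_cong[where f=w])
    next
      case False
      then have si: "Suc i = l - m" using i by simp
      have e: "nat (int l - int m) = l - m" using assms by simp
      have "k + 1 + int m - int l + int i = k" using si assms by simp
      then have idx: "w (k + 1 + int m - int l + int i) = Some p" using assms by metis
      show ?thesis using si i assms idx by (simp add: e win_nth nth_append nat_add_distrib)
    qed
  qed simp
  show "sres (win l m w k) (int l - int m) (int l - 1) =
    sres (Some p # sres (win l m w (k + 1)) (int l - int m) (int l - 2)) 0 (int m - 1)"
  proof (rule nth_equalityI)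
    fix j assume "j < length (sres (win l m w k) (int l - int m) (int l - 1))"
    then have j: "j < m" by simp
    show "sres (win l m w k) (int l - int m) (int l - 1) ! j =
      sres (Some p # sres (win l m w (k + 1)) (int l - int m) (int l - 2)) 0 (int m - 1) ! j"
    proof (cases j)
      case 0
      then show ?thesis using j assms by (simp add: win_nth)
    next
      case (Suc j')
      then show ?thesis using j assms by (simp add: win_nth nat_add_distrib)
    qed
  qed simp
qed

lemma cond12_nth:
  assumes "cond12 l m a p a'" "length a = l" "length a' = l" "m \<le> l" "j < m"
  shows "a ! (l - m + j) = (if j = 0 then Some p else a' ! (l - m + j - 1))"
proof -
  from assms(1) have e: "sres a (int l - int m) (int l - 1) ! j =
       sres (Some p # sres a' (int l - int m) (int l - 2)) 0 (int m - 1) ! j"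
    unfolding cond12_def by simp
  show ?thesis
  proof (cases j)
    case 0
    have "nat (int l - int m) = l - m" using assms by simp
    then show ?thesis using e assms 0 by simp
  next
    case (Suc j')
    have "nat (int l - int m) = l - m" using assms by simp
    moreover have "l + j' - m = l - m + j'" using assms by simp
    ultimately show ?thesis using e assms Suc by (simp add: nat_add_distrib)
  qed
qed

lemma cond12_unique:
  assumes "cond12 l m a p a'" "cond12 l m b p b'" "m \<le> l"
    "length a = l" "length a' = l" "length b = l" "length b' = l"
    "sres a 0 (int l - int m - 1) = sres b 0 (int l - int m - 1)"
    "sres a' (int l - int m) (int l - 1) = sres b' (int l - int m) (int l - 1)"
  shows "a = b \<and> a' = b'"
proof -
  have 1: "sres a' 0 (int l - int m - 1) = sres b' 0 (int l - int m - 1)"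
    using assms(1,2,8) unfolding cond12_def by simp
  have a': "a' = b'" using two_piece[OF assms(5,7,3) 1 assms(9)] .
  have 2: "sres a (int l - int m) (int l - 1) = sres b (int l - int m) (int l - 1)"
    using assms(1,2) a' unfolding cond12_def by simp
  have "a = b" using two_piece[OF assms(4,6,3) assms(8) 2] .
  with a' show ?thesis by simp
qed



definition wfo :: "bool \<Rightarrow> (nat \<Rightarrow> 'u) \<Rightarrow> (nat \<Rightarrow> 'y) \<Rightarrow> int \<Rightarrow> ('u,'y) sig option" where
  "wfo full \<mu> \<nu> t = (if t < 0 then None else Some (piV full (\<mu> (nat t)) (\<nu> (nat t))))"

lemma E_iff: "\<zeta> \<in> E full Q a b x \<longleftrightarrow>
   (\<exists>\<mu> \<nu> \<xi> k. (\<mu>,\<nu>,\<xi>) \<in> full_beh Q \<and> \<xi> k = x \<and> \<zeta> = fres (wfo full \<mu> \<nu>) (int k + a) (int k + b))"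
proof
  assume "\<zeta> \<in> E full Q a b x"
  then obtain w \<xi> k \<mu> \<nu> \<xi>' where h: "(\<mu>,\<nu>,\<xi>') \<in> full_beh Q"
    "\<forall>k. w k = (if k < 0 then None else Some (piV full (\<mu> (nat k)) (\<nu> (nat k))))"
    "\<forall>k. \<xi> k = (if k < 0 then None else Some (\<xi>' (nat k)))"
    "\<xi> (int k) = Some x" "\<zeta> = fres w (int k + a) (int k + b)"
    unfolding E_def behS_def by blast
  have "w = wfo full \<mu> \<nu>" using h(2) by (auto simp: wfo_def)
  moreover have "\<xi>' k = x" using h(3,4) by simp
  ultimately show "\<exists>\<mu> \<nu> \<xi> k. (\<mu>,\<nu>,\<xi>) \<in> full_beh Q \<and> \<xi> k = x \<and> \<zeta> = fres (wfo full \<mu> \<nu>) (int k + a) (int k + b)"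
    using h by blast
next
  assume "\<exists>\<mu> \<nu> \<xi> k. (\<mu>,\<nu>,\<xi>) \<in> full_beh Q \<and> \<xi> k = x \<and> \<zeta> = fres (wfo full \<mu> \<nu>) (int k + a) (int k + b)"
  then obtain \<mu> \<nu> \<xi> k where h: "(\<mu>,\<nu>,\<xi>) \<in> full_beh Q" "\<xi> k = x" "\<zeta> = fres (wfo full \<mu> \<nu>) (int k + a) (int k + b)" by blast
  define \<xi>o where "\<xi>o = (\<lambda>t::int. if t < 0 then None else Some (\<xi> (nat t)))"
  have "(wfo full \<mu> \<nu>, \<xi>o) \<in> behS full Q" unfolding behS_def \<xi>o_def using h(1) by (auto simp: wfo_def)
  moreover have "\<xi>o (int k) = Some x" using h(2) by (simp add: \<xi>o_def)
  ultimately show "\<zeta> \<in> E full Q a b x" unfolding E_def using h(3) by blast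
qed

lemma EI_iff: "xh \<in> EI full Q l m x \<longleftrightarrow>
   (\<exists>\<mu> \<nu> \<xi> k. (\<mu>,\<nu>,\<xi>) \<in> full_beh Q \<and> \<xi> k = x \<and> xh = win l m (wfo full \<mu> \<nu>) (int k))"
proof -
  have eq: "\<And>k w. fres w (int k + (int m - int l)) (int k + (int m - 1)) = win l m w (int k)"
    by (simp add: win_def algebra_simps)
  show ?thesis unfolding EI_def E_iff eq by (rule refl)
qed

lemma E1_iff: "z \<in> E full Q (int m - int l) (int m) x \<longleftrightarrow>
   (\<exists>\<mu> \<nu> \<xi> k. (\<mu>,\<nu>,\<xi>) \<in> full_beh Q \<and> \<xi> k = x \<and> z = win1 l m (wfo full \<mu> \<nu>) (int k))"
proof -
  have eq: "\<And>k w. fres w (int k + (int m - int l)) (int k + int m) = win1 l m w (int k)"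
    by (simp add: win1_def algebra_simps)
  show ?thesis unfolding E_iff eq by (rule refl)
qed

lemma beh_iff: "w \<in> beh full Q \<longleftrightarrow> (\<exists>\<mu> \<nu> \<xi>. (\<mu>,\<nu>,\<xi>) \<in> full_beh Q \<and> w = wfo full \<mu> \<nu>)"
  unfolding beh_def wfo_def by (auto simp: fun_eq_iff)

lemma Pi_iff: "z \<in> Pi_l n B \<longleftrightarrow> (\<exists>k::nat. \<exists>w\<in>B. z = fres w (int k - int n + 1) (int k))"
  unfolding Pi_l_def by auto

lemma wfo_Some: "t \<ge> 0 \<Longrightarrow> wfo full \<mu> \<nu> t = Some (piV full (\<mu> (nat t)) (\<nu> (nat t)))"
  by (simp add: wfo_def)

lemma fb_tr: "(\<mu>,\<nu>,\<xi>) \<in> full_beh Q \<Longrightarrow> (\<xi> k, \<mu> k, \<nu> k, \<xi> (Suc k)) \<in> Tr Q"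
  by (simp add: full_beh_def)

lemma splice:
  assumes "(\<mu>,\<nu>,\<xi>) \<in> full_beh Q" "\<xi> k = x" "(x,u,y,x') \<in> Tr Q"
    "(\<mu>',\<nu>',\<xi>') \<in> full_beh Q" "\<xi>' k' = x'"
  shows "\<exists>\<mu>'' \<nu>'' \<xi>''. (\<mu>'',\<nu>'',\<xi>'') \<in> full_beh Q \<and> \<xi>'' k = x \<and> \<xi>'' (Suc k) = x' \<and>
     (\<forall>t. t < int k \<longrightarrow> wfo full \<mu>'' \<nu>'' t = wfo full \<mu> \<nu> t) \<and>
     wfo full \<mu>'' \<nu>'' (int k) = Some (piV full u y) \<and>
     (\<forall>t. t > int k \<longrightarrow> wfo full \<mu>'' \<nu>'' t = wfo full \<mu>' \<nu>' (t - int k - 1 + int k'))"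
proof -
  define \<mu>'' where "\<mu>'' = (\<lambda>n. if n < k then \<mu> n else if n = k then u else \<mu>' (n - k - 1 + k'))"
  define \<nu>'' where "\<nu>'' = (\<lambda>n. if n < k then \<nu> n else if n = k then y else \<nu>' (n - k - 1 + k'))"
  define \<xi>'' where "\<xi>'' = (\<lambda>n. if n \<le> k then \<xi> n else \<xi>' (n - k - 1 + k'))"
  have "(\<mu>'',\<nu>'',\<xi>'') \<in> full_beh Q"
    unfolding full_beh_def
  proof (clarsimp, intro conjI allI)
    show "\<xi>'' 0 \<in> Init Q" using assms(1) by (simp add: \<xi>''_def full_beh_def)
    fix n
    show "(\<xi>'' n, \<mu>'' n, \<nu>'' n, \<xi>'' (Suc n)) \<in> Tr Q"
    proof (cases "n < k")
      case True then show ?thesis using fb_tr[OF assms(1), of n] by (simp add: \<xi>''_def \<mu>''_def \<nu>''_def)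
    next
      case False
      show ?thesis
      proof (cases "n = k")
        case True then show ?thesis using assms(2,3,5) by (simp add: \<xi>''_def \<mu>''_def \<nu>''_def)
      next
        case False2: False
        then have "Suc n - k - 1 + k' = Suc (n - k - 1 + k')" using False by simp
        then show ?thesis using False False2 fb_tr[OF assms(4), of "n - k - 1 + k'"]
          by (simp add: \<xi>''_def \<mu>''_def \<nu>''_def)
      qed
    qed
  qed
  moreover have "\<xi>'' k = x" "\<xi>'' (Suc k) = x'" using assms by (simp_all add: \<xi>''_def)
  moreover have "\<forall>t. t < int k \<longrightarrow> wfo full \<mu>'' \<nu>'' t = wfo full \<mu> \<nu> t"
  proof (intro allI impI)
    fix t assume t: "t < int k"
    show "wfo full \<mu>'' \<nu>'' t = wfo full \<mu> \<nu> t"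
    proof (cases "t < 0")
      case False
      then have "nat t < k" using t by linarith
      then show ?thesis using False by (simp add: wfo_def \<mu>''_def \<nu>''_def)
    qed (simp add: wfo_def)
  qed
  moreover have "wfo full \<mu>'' \<nu>'' (int k) = Some (piV full u y)"
    by (simp add: wfo_def \<mu>''_def \<nu>''_def)
  moreover have "\<forall>t. t > int k \<longrightarrow> wfo full \<mu>'' \<nu>'' t = wfo full \<mu>' \<nu>' (t - int k - 1 + int k')"
  proof (intro allI impI)
    fix t assume t: "t > int k"
    have e: "nat (t - int k - 1 + int k') = nat t - k - 1 + k'" using t by linarith
    have n: "\<not> nat t < k" "nat t \<noteq> k" "\<not> t < 0" "\<not> t - int k - 1 + int k' < 0" using t by linarith+
    have "wfo full \<mu>'' \<nu>'' t = Some (piV full (\<mu>' (nat t - k - 1 + k')) (\<nu>' (nat t - k - 1 + k')))"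
      using n unfolding wfo_def \<mu>''_def \<nu>''_def by (simp only: if_False)
    also have "\<dots> = wfo full \<mu>' \<nu>' (t - int k - 1 + int k')"
      using n unfolding wfo_def e by (simp only: if_False)
    finally show "wfo full \<mu>'' \<nu>'' t = wfo full \<mu>' \<nu>' (t - int k - 1 + int k')" .
  qed
  ultimately show ?thesis by blast
qed



lemma SW:
  assumes ml: "m \<le> l"
    and A: "(\<mu>,\<nu>,\<xi>) \<in> full_beh Q" "\<xi> kA = x" "xh = win l m (wfo full \<mu> \<nu>) (int kA)"
    and B: "(\<mu>',\<nu>',\<xi>') \<in> full_beh Q" "\<xi>' kB = x'" "xh' = win l m (wfo full \<mu>' \<nu>') (int kB)"
    and tr: "(x,u,y,x') \<in> Tr Q"
    and c: "cond12 l m xh (piV full u y) xh'"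
  shows "\<exists>\<mu>'' \<nu>'' \<xi>''. (\<mu>'',\<nu>'',\<xi>'') \<in> full_beh Q \<and> \<xi>'' kA = x \<and> \<xi>'' (Suc kA) = x' \<and>
     sres (win1 l m (wfo full \<mu>'' \<nu>'') (int kA)) 0 (int l - 1) = xh \<and>
     sres (win1 l m (wfo full \<mu>'' \<nu>'') (int kA)) 1 (int l) = xh' \<and>
     wfo full \<mu>'' \<nu>'' (int kA) = Some (piV full u y)"
proof -
  obtain \<mu>'' \<nu>'' \<xi>'' where S: "(\<mu>'',\<nu>'',\<xi>'') \<in> full_beh Q" "\<xi>'' kA = x" "\<xi>'' (Suc kA) = x'"
     "\<forall>t. t < int kA \<longrightarrow> wfo full \<mu>'' \<nu>'' t = wfo full \<mu> \<nu> t"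
     "wfo full \<mu>'' \<nu>'' (int kA) = Some (piV full u y)"
     "\<forall>t. t > int kA \<longrightarrow> wfo full \<mu>'' \<nu>'' t = wfo full \<mu>' \<nu>' (t - int kA - 1 + int kB)"
    using splice[OF A(1,2) tr B(1,2)] by blast
  define w where "w = wfo full \<mu>'' \<nu>''"
  define z2 where "z2 = win l m w (int kA)"
  define z2' where "z2' = win l m w (int kA + 1)"
  have c2: "cond12 l m z2 (piV full u y) z2'" unfolding z2_def z2'_def w_def
    by (rule condC[of "wfo full \<mu>'' \<nu>''", OF S(5) ml])
  have p1: "sres z2 0 (int l - int m - 1) = sres xh 0 (int l - int m - 1)"
  proof (rule nth_equalityI)
    fix i assume "i < length (sres z2 0 (int l - int m - 1))"
    then have i: "i < l - m" by simp
    then have "int kA + int m - int l + int i < int kA" using ml by linarith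
    then show "sres z2 0 (int l - int m - 1) ! i = sres xh 0 (int l - int m - 1) ! i"
      using i ml S(4) by (simp add: z2_def A(3) win_nth w_def)
  qed simp
  have p2: "sres z2' (int l - int m) (int l - 1) = sres xh' (int l - int m) (int l - 1)"
  proof (rule nth_equalityI)
    fix j assume "j < length (sres z2' (int l - int m) (int l - 1))"
    then have j: "j < m" by simp
    have n: "nat (int l - int m + int j) = l - m + j" "l - m + j < l" using j ml by auto
    have e1: "int kA + 1 + int m - int l + int (l - m + j) = int kA + 1 + int j" using ml by simp
    have e2: "int kB + int m - int l + int (l - m + j) = int kA + 1 + int j - int kA - 1 + int kB" using ml by simp
    show "sres z2' (int l - int m) (int l - 1) ! j = sres xh' (int l - int m) (int l - 1) ! j"
      using j n S(6)
      by (simp only: sres_nth[of j] z2'_def B(3) win_nth e1 e2 w_def)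
  qed simp
  have eq: "z2 = xh \<and> z2' = xh'"
    by (rule cond12_unique[OF c2 c ml _ _ _ _ p1 p2]) (auto simp: z2_def z2'_def A(3) B(3))
  show ?thesis
    using S(1,2,3,5) eq win1_first[of l m w "int kA"] win1_second[of l m w "int kA"]
    unfolding z2_def z2'_def w_def by blast
qed



theorem theorem3:
  fixes Q :: "('x,'u,'y) sm" and full :: bool and l m :: nat
  assumes "is_sm Q"
    and "live_reachable Q"
    and "standing_tr Q"
    and "W_finite Q full"
    and "m \<le> l"
  defines "R \<equiv> {(x, xh). x \<in> St Q \<and> xh \<in> St (abs_sm full Q l m) \<and> xh \<in> EI full Q l m x}"
  shows "(sim_rel Q (abs_sm full Q l m) True R \<longleftrightarrow> future_unique full Q l m) \<and>
         (sim_rel (abs_sm full Q l m) Q full (R\<inverse>) \<longleftrightarrow> async_complete full Q l m)"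
proof -
  note ml = assms(5)
  have trSt: "\<And>x u y x'. (x,u,y,x') \<in> Tr Q \<Longrightarrow> x \<in> St Q \<and> x' \<in> St Q"
    using assms(1) unfolding is_sm_def by blast
  have fbSt: "\<And>\<mu> \<nu> \<xi> k. (\<mu>,\<nu>,\<xi>) \<in> full_beh Q \<Longrightarrow> \<xi> k \<in> St Q"
    using fb_tr trSt by blast
  have StA: "St (abs_sm full Q l m) = (\<Union>x \<in> St Q. EI full Q l m x)" by (simp add: abs_sm_def)
  have InitA: "Init (abs_sm full Q l m) = (\<Union>x \<in> Init Q. EI full Q l m x)" by (simp add: abs_sm_def)
  have TrA: "\<And>xh u y xh'. (xh,u,y,xh') \<in> Tr (abs_sm full Q l m) \<longleftrightarrow>
      cond12 l m xh (piV full u y) xh' \<and>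
      (\<exists>x x'. xh \<in> EI full Q l m x \<and> xh' \<in> EI full Q l m x' \<and> (x,u,y,x') \<in> Tr Q)"
    by (simp add: abs_sm_def cond12_def)
  have Rm: "\<And>x xh. (x,xh) \<in> R \<longleftrightarrow> x \<in> St Q \<and> xh \<in> EI full Q l m x"
    unfolding R_def StA by blast
  have pT: "\<And>u y u' y'. piV True u y = piV True u' y' \<longleftrightarrow> u = u' \<and> y = y'"
    by (simp add: piV_def)
  have live1: "\<And>x. x \<in> St Q \<Longrightarrow> \<exists>\<mu> \<nu> \<xi> k. (\<mu>,\<nu>,\<xi>) \<in> full_beh Q \<and> \<xi> k = x"
    using assms(2) unfolding live_reachable_def by blast
  have live0: "\<And>x. x \<in> Init Q \<Longrightarrow> \<exists>\<mu> \<nu> \<xi>. (\<mu>,\<nu>,\<xi>) \<in> full_beh Q \<and> \<xi> 0 = x"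
    using assms(2) unfolding live_reachable_def by blast
  have InitSt: "Init Q \<subseteq> St Q" using assms(1) unfolding is_sm_def by blast

  have i1: "future_unique full Q l m" if sim: "sim_rel Q (abs_sm full Q l m) True R"
  proof -
    have onestep: "\<exists>xh'. cond12 l m zh (piV full (\<mu> k) (\<nu> k)) xh' \<and> xh' \<in> EI full Q l m (\<xi> (Suc k))
        \<and> length zh = l \<and> length xh' = l"
      if fb: "(\<mu>,\<nu>,\<xi>) \<in> full_beh Q" and z: "zh \<in> EI full Q l m (\<xi> k)" for \<mu> \<nu> \<xi> k zh
    proof -
      have inR: "(\<xi> k, zh) \<in> R" using Rm fbSt[OF fb] z by blast
      have sstep: "\<forall>(x1,x2)\<in>R. \<forall>u1 y1 x1'. (x1,u1,y1,x1') \<in> Tr Q \<longrightarrow>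
          (\<exists>u2 y2 x2'. (x2,u2,y2,x2') \<in> Tr (abs_sm full Q l m) \<and> (x1',x2') \<in> R \<and> piV True u1 y1 = piV True u2 y2)"
        using sim unfolding sim_rel_def by (rule conjunct2)
      have "\<forall>u1 y1 x1'. (\<xi> k,u1,y1,x1') \<in> Tr Q \<longrightarrow>
          (\<exists>u2 y2 x2'. (zh,u2,y2,x2') \<in> Tr (abs_sm full Q l m) \<and> (x1',x2') \<in> R \<and> piV True u1 y1 = piV True u2 y2)"
        using bspec[OF sstep inR] by simp
      then obtain u2 y2 xh' where t: "(zh,u2,y2,xh') \<in> Tr (abs_sm full Q l m)"
            "(\<xi> (Suc k), xh') \<in> R" "piV True (\<mu> k) (\<nu> k) = piV True u2 y2"
        using fb_tr[OF fb, of k] by blast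
      have "\<mu> k = u2 \<and> \<nu> k = y2" using t(3) by (simp add: piV_def)
      then have c: "cond12 l m zh (piV full (\<mu> k) (\<nu> k)) xh'" using t(1) TrA by simp
      have xE: "xh' \<in> EI full Q l m (\<xi> (Suc k))" using t(2) Rm by simp
      have lz: "length zh = l" "length xh' = l" using z xE by (auto simp: EI_iff)
      show ?thesis using c xE lz by blast
    qed
    have fut: "zh ! (l - m + j) = wfo full \<mu> \<nu> (int k + int j)"
      if "(\<mu>,\<nu>,\<xi>) \<in> full_beh Q" "j < m" "zh \<in> EI full Q l m (\<xi> k)" for \<mu> \<nu> \<xi> j k zh
      using that
    proof (induction j arbitrary: k zh)
      case 0
      obtain xh' where o: "cond12 l m zh (piV full (\<mu> k) (\<nu> k)) xh'" "length zh = l" "length xh' = l"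
        using onestep[OF 0(1) 0(3)] by blast
      show ?case using cond12_nth[OF o ml 0(2)] by (simp add: wfo_def)
    next
      case (Suc j)
      obtain xh' where o: "cond12 l m zh (piV full (\<mu> k) (\<nu> k)) xh'" "xh' \<in> EI full Q l m (\<xi> (Suc k))"
        "length zh = l" "length xh' = l"
        using onestep[OF Suc(2) Suc(4)] by blast
      have "zh ! (l - m + Suc j) = xh' ! (l - m + j)"
        using cond12_nth[OF o(1,3,4) ml Suc(3)] by simp
      also have "\<dots> = wfo full \<mu> \<nu> (int (Suc k) + int j)"
        using Suc(1)[OF Suc(2) Suc_lessD[OF Suc(3)] o(2)] .
      finally show ?case
        apply (rule trans)
        apply (rule arg_cong[where f="wfo full \<mu> \<nu>"])
        by simp
    qed
    show ?thesis unfolding future_unique_def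
    proof (intro ballI)
      fix x z z' assume x: "x \<in> St Q" and z: "z \<in> EI full Q l m x" and z': "z' \<in> EI full Q l m x"
      obtain \<mu> \<nu> \<xi> k where h: "(\<mu>,\<nu>,\<xi>) \<in> full_beh Q" "\<xi> k = x" "z' = win l m (wfo full \<mu> \<nu>) (int k)"
        using z' EI_iff by metis
      show "sres z (int l - int m) (int l - 1) = sres z' (int l - int m) (int l - 1)"
      proof (rule nth_equalityI)
        fix j assume "j < length (sres z (int l - int m) (int l - 1))"
        then have j: "j < m" by simp
        have n: "nat (int l - int m + int j) = l - m + j" "l - m + j < l" using j ml by auto
        have e: "int k + int m - int l + int (l - m + j) = int k + int j" using ml by simp
        show "sres z (int l - int m) (int l - 1) ! j = sres z' (int l - int m) (int l - 1) ! j"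
        proof -
          have fz: "z ! (l - m + j) = wfo full \<mu> \<nu> (int k + int j)" using fut h(1) j z h(2) by blast
          show ?thesis using j n fz
            apply (simp add: h(3) win_nth)
            apply (rule arg_cong[where f="wfo full \<mu> \<nu>"])
            using ml by simp
        qed
      qed simp
    qed
  qed
  have i2: "sim_rel Q (abs_sm full Q l m) True R" if fu: "future_unique full Q l m"
  proof -
  have init: "\<exists>x2\<in>Init (abs_sm full Q l m). (x, x2) \<in> R" if x: "x \<in> Init Q" for x
  proof -
    obtain \<mu> \<nu> \<xi> where "(\<mu>,\<nu>,\<xi>) \<in> full_beh Q" "\<xi> 0 = x" using live0[OF x] by blast
    then have "win l m (wfo full \<mu> \<nu>) (int 0) \<in> EI full Q l m x" unfolding EI_iff by blast
    then show "\<exists>x2\<in>Init (abs_sm full Q l m). (x, x2) \<in> R" using x InitSt InitA Rm by blast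
  qed
  have step: "\<exists>u2 y2 x2'. (xh, u2, y2, x2') \<in> Tr (abs_sm full Q l m) \<and>
        (x1', x2') \<in> R \<and> piV True u1 y1 = piV True u2 y2"
    if p: "(x,xh) \<in> R" and t': "(x, u1, y1, x1') \<in> Tr Q" for x xh u1 y1 x1'
  proof -
    have x: "x \<in> St Q" and xh: "xh \<in> EI full Q l m x" using p Rm by auto
    obtain \<mu> \<nu> \<xi> k where A: "(\<mu>,\<nu>,\<xi>) \<in> full_beh Q" "\<xi> k = x" "xh = win l m (wfo full \<mu> \<nu>) (int k)"
      using xh EI_iff by metis
    have x1': "x1' \<in> St Q" using trSt[OF t'] by blast
    obtain \<mu>' \<nu>' \<xi>' k' where B: "(\<mu>',\<nu>',\<xi>') \<in> full_beh Q" "\<xi>' k' = x1'" using live1[OF x1'] by blast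
    obtain \<mu>'' \<nu>'' \<xi>'' where S: "(\<mu>'',\<nu>'',\<xi>'') \<in> full_beh Q" "\<xi>'' k = x" "\<xi>'' (Suc k) = x1'"
       "\<forall>t. t < int k \<longrightarrow> wfo full \<mu>'' \<nu>'' t = wfo full \<mu> \<nu> t"
       "wfo full \<mu>'' \<nu>'' (int k) = Some (piV full u1 y1)"
      using splice[OF A(1,2) t' B] by blast
    define w where "w = wfo full \<mu>'' \<nu>''"
    define z2 where "z2 = win l m w (int k)"
    define xh' where "xh' = win l m w (int k + 1)"
    have xh'E: "xh' \<in> EI full Q l m x1'" unfolding EI_iff xh'_def w_def
      using S(1,3) by (metis of_nat_Suc add.commute)
    have z2E: "z2 \<in> EI full Q l m x" unfolding EI_iff z2_def w_def using S(1,2) by blast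
    have c2: "cond12 l m z2 (piV full u1 y1) xh'" unfolding z2_def xh'_def w_def
      by (rule condC[of "wfo full \<mu>'' \<nu>''", OF S(5) ml])
    have p1: "sres xh 0 (int l - int m - 1) = sres z2 0 (int l - int m - 1)"
    proof (rule nth_equalityI)
      fix i assume "i < length (sres xh 0 (int l - int m - 1))"
      then have i: "i < l - m" using A(3) by simp
      then have "int k + int m - int l + int i < int k" using ml by linarith
      then show "sres xh 0 (int l - int m - 1) ! i = sres z2 0 (int l - int m - 1) ! i"
        using i ml S(4) by (simp add: z2_def A(3) win_nth w_def)
    qed (simp add: A(3) z2_def)
    have p2: "sres xh (int l - int m) (int l - 1) = sres z2 (int l - int m) (int l - 1)"
      using fu x xh z2E unfolding future_unique_def by blast
    have "xh = z2" by (rule two_piece[OF _ _ ml p1 p2]) (simp_all add: A(3) z2_def)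
    then have c: "cond12 l m xh (piV full u1 y1) xh'" using c2 by simp
    have "(xh, u1, y1, xh') \<in> Tr (abs_sm full Q l m)" using TrA c xh xh'E t' by blast
    moreover have "(x1', xh') \<in> R" using Rm x1' xh'E by blast
    ultimately show ?thesis by blast
  qed
  show ?thesis unfolding sim_rel_def using init step by fast
  qed

  have ii1: "async_complete full Q l m" if sim: "sim_rel (abs_sm full Q l m) Q full (R\<inverse>)"
    unfolding async_complete_def
  proof (intro ballI impI)
    fix x z assume x: "x \<in> St Q" and zP: "z \<in> Pi_l (l+1) (beh full Q)"
      and zx: "sres z 0 (int l - 1) \<in> EI full Q l m x"
    obtain K :: nat and w where Kw: "w \<in> beh full Q" "z = fres w (int K - int (l+1) + 1) (int K)"
      using zP Pi_iff by metis
    obtain \<mu> \<nu> \<xi> where W: "(\<mu>,\<nu>,\<xi>) \<in> full_beh Q" "w = wfo full \<mu> \<nu>" using Kw(1) beh_iff by metis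
    have zw: "z = win1 l m w (int K - int m)" using Kw(2) by (simp add: win1_def)
    define xh where "xh = sres z 0 (int l - 1)"
    have xhw: "xh = win l m w (int K - int m)" unfolding xh_def zw by (rule win1_first)
    obtain \<mu>a \<nu>a \<xi>a kA where A: "(\<mu>a,\<nu>a,\<xi>a) \<in> full_beh Q" "\<xi>a kA = x"
        "xh = win l m (wfo full \<mu>a \<nu>a) (int kA)"
      using zx EI_iff unfolding xh_def by metis
    have Km: "m \<le> K"
    proof (rule ccontr)
      assume "\<not> m \<le> K"
      then have lt: "l - m < l" "int K - int m < 0" using ml by auto
      have "xh ! (l - m) = w (int K - int m + int m - int l + int (l - m))" using xhw lt by (simp add: win_nth)
      also have "\<dots> = None" using lt ml by (simp add: W(2) wfo_def)
      finally have 1: "xh ! (l - m) = None" .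
      have "xh ! (l - m) = wfo full \<mu>a \<nu>a (int kA + int m - int l + int (l - m))" using A(3) lt by (simp add: win_nth)
      also have "\<dots> \<noteq> None" using ml by (simp add: wfo_def)
      finally show False using 1 by simp
    qed
    define k0 where "k0 = K - m"
    have k0i: "int K - int m = int k0" using Km k0_def by simp
    define p where "p = piV full (\<mu> k0) (\<nu> k0)"
    define xh' where "xh' = win l m w (int k0 + 1)"
    have wk0: "w (int k0) = Some p" by (simp add: W(2) wfo_def p_def)
    have xhk: "xh = win l m w (int k0)" using xhw k0i by simp
    have c: "cond12 l m xh p xh'" unfolding xhk xh'_def by (rule condC[of w, OF wk0 ml])
    have xhE0: "xh \<in> EI full Q l m (\<xi> k0)" unfolding EI_iff xhk W(2) using W(1) by blast
    have xh'E0: "xh' \<in> EI full Q l m (\<xi> (Suc k0))" unfolding EI_iff xh'_def W(2) using W(1)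
      by (metis of_nat_Suc add.commute)
    have trA: "(xh, \<mu> k0, \<nu> k0, xh') \<in> Tr (abs_sm full Q l m)"
      unfolding TrA using c xhE0 xh'E0 fb_tr[OF W(1), of k0] p_def by blast
    have inR: "(xh, x) \<in> R\<inverse>" using Rm x zx xh_def by simp
    have sstep: "\<forall>(x1,x2)\<in>R\<inverse>. \<forall>u1 y1 x1'. (x1,u1,y1,x1') \<in> Tr (abs_sm full Q l m) \<longrightarrow>
        (\<exists>u2 y2 x2'. (x2,u2,y2,x2') \<in> Tr Q \<and> (x1',x2') \<in> R\<inverse> \<and> piV full u1 y1 = piV full u2 y2)"
      using sim unfolding sim_rel_def by (rule conjunct2)
    have "\<forall>u1 y1 x1'. (xh,u1,y1,x1') \<in> Tr (abs_sm full Q l m) \<longrightarrow>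
        (\<exists>u2 y2 x2'. (x,u2,y2,x2') \<in> Tr Q \<and> (x1',x2') \<in> R\<inverse> \<and> piV full u1 y1 = piV full u2 y2)"
      using bspec[OF sstep inR] by simp
    then obtain u2 y2 x2' where s: "(x,u2,y2,x2') \<in> Tr Q" "(xh',x2') \<in> R\<inverse>"
        "piV full (\<mu> k0) (\<nu> k0) = piV full u2 y2"
      using trA by blast
    have c2: "cond12 l m xh (piV full u2 y2) xh'" using c s(3) p_def by simp
    have xh'E: "xh' \<in> EI full Q l m x2'" using s(2) Rm by simp
    obtain \<mu>b \<nu>b \<xi>b kB where B: "(\<mu>b,\<nu>b,\<xi>b) \<in> full_beh Q" "\<xi>b kB = x2'"
        "xh' = win l m (wfo full \<mu>b \<nu>b) (int kB)"
      using xh'E EI_iff by metis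
    obtain \<mu>'' \<nu>'' \<xi>'' where S: "(\<mu>'',\<nu>'',\<xi>'') \<in> full_beh Q" "\<xi>'' kA = x"
      "sres (win1 l m (wfo full \<mu>'' \<nu>'') (int kA)) 0 (int l - 1) = xh"
      "sres (win1 l m (wfo full \<mu>'' \<nu>'') (int kA)) 1 (int l) = xh'"
      "wfo full \<mu>'' \<nu>'' (int kA) = Some (piV full u2 y2)"
      using SW[OF ml A B s(1) c2] by blast
    define z'' where "z'' = win1 l m (wfo full \<mu>'' \<nu>'') (int kA)"
    have z''E: "z'' \<in> E full Q (int m - int l) (int m) x" unfolding E1_iff z''_def using S(1,2) by blast
    have zsec: "sres z 1 (int l) = xh'" unfolding zw k0i xh'_def by (rule win1_second)
    have "z = z''"
    proof (rule nth_equalityI)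
      show "length z = length z''" by (simp add: zw z''_def)
      fix i assume "i < length z"
      then have i: "i \<le> l" by (simp add: zw)
      show "z ! i = z'' ! i"
      proof (cases "i < l")
        case True
        have "sres z 0 (int l - 1) ! i = sres z'' 0 (int l - 1) ! i"
          using S(3) xh_def z''_def by simp
        then show ?thesis using True by simp
      next
        case False
        then have il: "i = l" using i by simp
        show ?thesis
        proof (cases "l = 0")
          case False
          have "sres z 1 (int l) ! (l - 1) = sres z'' 1 (int l) ! (l - 1)"
            using S(4) zsec z''_def by simp
          moreover have "nat (1 + int (l - 1)) = l" using False by simp
          ultimately show ?thesis using il False by simp
        next
          case True
          then have m0: "m = 0" "i = 0" using ml il by auto
          have "z ! 0 = w (int k0)" using m0 True by (simp add: zw k0i win1_nth k0_def)
          moreover have "z'' ! 0 = wfo full \<mu>'' \<nu>'' (int kA)" using m0 True by (simp add: z''_def win1_nth)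
          ultimately show ?thesis using wk0 S(5) s(3) p_def m0 by simp
        qed
      qed
    qed
    then show "z \<in> E full Q (int m - int l) (int m) x" using z''E by simp
  qed
  have ii2: "sim_rel (abs_sm full Q l m) Q full (R\<inverse>)" if ac: "async_complete full Q l m"
  proof -
    have init: "\<exists>x2\<in>Init Q. (xh, x2) \<in> R\<inverse>" if "xh \<in> Init (abs_sm full Q l m)" for xh
      using that InitA InitSt Rm by blast
    have step: "\<exists>u2 y2 x2'. (x, u2, y2, x2') \<in> Tr Q \<and>
        (xh', x2') \<in> R\<inverse> \<and> piV full u y = piV full u2 y2"
      if p: "(xh,x) \<in> R\<inverse>" and t: "(xh, u, y, xh') \<in> Tr (abs_sm full Q l m)" for x xh u y xh'
    proof -
      have x: "x \<in> St Q" and xh: "xh \<in> EI full Q l m x" using p Rm by auto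
      obtain x1 x1' where c: "cond12 l m xh (piV full u y) xh'" "xh \<in> EI full Q l m x1"
          "xh' \<in> EI full Q l m x1'" "(x1,u,y,x1') \<in> Tr Q"
        using t unfolding TrA by blast
      obtain \<mu>a \<nu>a \<xi>a kA where A: "(\<mu>a,\<nu>a,\<xi>a) \<in> full_beh Q" "\<xi>a kA = x1"
          "xh = win l m (wfo full \<mu>a \<nu>a) (int kA)"
        using c(2) EI_iff by metis
      obtain \<mu>b \<nu>b \<xi>b kB where B: "(\<mu>b,\<nu>b,\<xi>b) \<in> full_beh Q" "\<xi>b kB = x1'"
          "xh' = win l m (wfo full \<mu>b \<nu>b) (int kB)"
        using c(3) EI_iff by metis
      obtain \<mu>'' \<nu>'' \<xi>'' where S: "(\<mu>'',\<nu>'',\<xi>'') \<in> full_beh Q"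
        "sres (win1 l m (wfo full \<mu>'' \<nu>'') (int kA)) 0 (int l - 1) = xh"
        "sres (win1 l m (wfo full \<mu>'' \<nu>'') (int kA)) 1 (int l) = xh'"
        "wfo full \<mu>'' \<nu>'' (int kA) = Some (piV full u y)"
        using SW[OF ml A B c(4) c(1)] by blast
      define z where "z = win1 l m (wfo full \<mu>'' \<nu>'') (int kA)"
      have "wfo full \<mu>'' \<nu>'' \<in> beh full Q" using S(1) beh_iff by blast
      moreover have "z = fres (wfo full \<mu>'' \<nu>'') (int (kA + m) - int (l+1) + 1) (int (kA + m))"
        unfolding z_def win1_def by (rule arg_cong2[where f="fres (wfo full \<mu>'' \<nu>'')"]) simp_all
      ultimately have zP: "z \<in> Pi_l (l+1) (beh full Q)" unfolding Pi_iff by blast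
      have "z \<in> E full Q (int m - int l) (int m) x"
        using ac x zP S(2) xh unfolding async_complete_def z_def by auto
      then obtain \<mu>c \<nu>c \<xi>c kC where C: "(\<mu>c,\<nu>c,\<xi>c) \<in> full_beh Q" "\<xi>c kC = x"
          "z = win1 l m (wfo full \<mu>c \<nu>c) (int kC)"
        using E1_iff by metis
      have trC: "(x, \<mu>c kC, \<nu>c kC, \<xi>c (Suc kC)) \<in> Tr Q" using fb_tr[OF C(1), of kC] C(2) by simp
      have "xh' = win l m (wfo full \<mu>c \<nu>c) (int kC + 1)"
        using S(3) win1_second[of l m "wfo full \<mu>c \<nu>c" "int kC"] C(3) z_def by simp
      then have xh'E: "xh' \<in> EI full Q l m (\<xi>c (Suc kC))" unfolding EI_iff using C(1)
        by (metis of_nat_Suc add.commute)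
      have lm: "l - m \<le> l" by simp
      have "z ! (l - m) = wfo full \<mu>c \<nu>c (int kC)"
        using C(3) win1_nth[OF lm, of m "wfo full \<mu>c \<nu>c" "int kC"] ml by simp
      moreover have "z ! (l - m) = wfo full \<mu>'' \<nu>'' (int kA)"
        using win1_nth[OF lm, of m "wfo full \<mu>'' \<nu>''" "int kA"] ml z_def by simp
      ultimately have "piV full u y = piV full (\<mu>c kC) (\<nu>c kC)" using S(4) by (simp add: wfo_def)
      moreover have "(xh', \<xi>c (Suc kC)) \<in> R\<inverse>" using Rm xh'E fbSt[OF C(1)] by simp
      ultimately show ?thesis using trC by blast
    qed
    show ?thesis unfolding sim_rel_def using init step by fast
  qed
  show ?thesis using i1 i2 ii1 ii2 by blast
qed

end
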